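(* Let $H$ be a complex Hilbert space, $V=\mathcal{L}(H)_{sa}$, $r$ a positive integer and $a,b\in\mathfrak{M}(r)$, the set of projections of rank $r$ in $V$. Then $b\in\mathcal{O}_a$ if and only if $a\in\mathcal{O}_b$.
   Context: $V$ is the set of self-adjoint bounded operators on $H$; a projection is $a=a^2=a^*$. For $a\in\mathfrak{M}(r)$, $V_1(a)=aVa$ is a Jordan algebra (product $x\circ y=\frac12(xy+yx)$) with unit $a$, and the antipodal set of $a$ is $\mathcal{O}_a=\{b\in\mathfrak{M}(r): aba\text{ is not invertible in }V_1(a)\}$. *)

theory Defs
  imports "HOL-Analysis.Analysis"
begin

text \<open>A complex Hilbert space: a real Banach space with a complex scalar
multiplication extending the real one and a complex inner product
(conjugate-linear in the first argument) inducing the norm.\<close>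

class chilbert = banach +
  fixes hscaleC :: "complex \<Rightarrow> 'a \<Rightarrow> 'a"
    and hinner :: "'a \<Rightarrow> 'a \<Rightarrow> complex"
  assumes hscaleC_of_real: "hscaleC (complex_of_real t) x = t *\<^sub>R x"
    and hscaleC_add_right: "hscaleC c (x + y) = hscaleC c x + hscaleC c y"
    and hscaleC_add_left: "hscaleC (c + d) x = hscaleC c x + hscaleC d x"
    and hscaleC_mult: "hscaleC c (hscaleC d x) = hscaleC (c * d) x"
    and hinner_cnj: "hinner x y = cnj (hinner y x)"
    and hinner_add_left: "hinner (x + y) z = hinner x z + hinner y z"
    and hinner_scaleC_left: "hinner (hscaleC c x) y = cnj c * hinner x y"
    and norm_hinner: "norm x = sqrt (Re (hinner x x))"

definition bounded_clin :: "('a::chilbert \<Rightarrow> 'a) \<Rightarrow> bool" where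
  "bounded_clin f \<longleftrightarrow>
     (\<forall>x y. f (x + y) = f x + f y) \<and>
     (\<forall>c x. f (hscaleC c x) = hscaleC c (f x)) \<and>
     (\<exists>K. \<forall>x. norm (f x) \<le> norm x * K)"

definition SA :: "('a::chilbert \<Rightarrow> 'a) set" where
  "SA = {f. bounded_clin f \<and> (\<forall>x y. hinner (f x) y = hinner x (f y))}"

definition cindep :: "'a::chilbert set \<Rightarrow> bool" where
  "cindep B \<longleftrightarrow> (\<forall>c. (\<Sum>v\<in>B. hscaleC (c v) v) = 0 \<longrightarrow> (\<forall>v\<in>B. c v = 0))"

definition cspan_fin :: "'a::chilbert set \<Rightarrow> 'a set" where
  "cspan_fin B = {(\<Sum>v\<in>B. hscaleC (c v) v) | c. True}"

definition has_rank :: "('a::chilbert \<Rightarrow> 'a) \<Rightarrow> nat \<Rightarrow> bool" where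
  "has_rank f r \<longleftrightarrow>
     (\<exists>B. finite B \<and> card B = r \<and> cindep B \<and> range f = cspan_fin B)"

definition projs :: "nat \<Rightarrow> ('a::chilbert \<Rightarrow> 'a) set" where
  "projs r = {a \<in> SA. a \<circ> a = a \<and> has_rank a r}"

definition jprod :: "('a::chilbert \<Rightarrow> 'a) \<Rightarrow> ('a \<Rightarrow> 'a) \<Rightarrow> ('a \<Rightarrow> 'a)" where
  "jprod x y = (\<lambda>v. (1/2::real) *\<^sub>R (x (y v) + y (x v)))"

definition V1 :: "('a::chilbert \<Rightarrow> 'a) \<Rightarrow> ('a \<Rightarrow> 'a) set" where
  "V1 a = {a \<circ> x \<circ> a | x. x \<in> SA}"

definition jinvertible_in :: "('a::chilbert \<Rightarrow> 'a) set \<Rightarrow> ('a \<Rightarrow> 'a) \<Rightarrow> ('a \<Rightarrow> 'a) \<Rightarrow> bool" where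
  "jinvertible_in J e x \<longleftrightarrow> (\<exists>y\<in>J. jprod x y = e \<and> jprod (jprod x x) y = x)"

definition antipodal :: "nat \<Rightarrow> ('a::chilbert \<Rightarrow> 'a) \<Rightarrow> ('a \<Rightarrow> 'a) set" where
  "antipodal r a = {b \<in> projs r. \<not> jinvertible_in (V1 a) a (a \<circ> b \<circ> a)}"

end

theory Submission
  imports Defs
begin


lemma hscaleC_zero_right[simp]: "hscaleC c (0::'a::chilbert) = 0"
proof -
  have "hscaleC c (0::'a) = hscaleC c 0 + hscaleC c 0" by (metis add_0 hscaleC_add_right)
  then show ?thesis by simp
qed

lemma hscaleC_zero_left[simp]: "hscaleC 0 (x::'a::chilbert) = 0"
  by (metis hscaleC_of_real of_real_0 scaleR_zero_left)

lemma hscaleC_one[simp]: "hscaleC 1 (x::'a::chilbert) = x"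
  by (metis hscaleC_of_real of_real_1 scaleR_one)

lemma hinner_zero_left[simp]: "hinner (0::'a::chilbert) x = 0"
proof -
  have "hinner (0::'a) x = hinner 0 x + hinner 0 x" by (metis add_0 hinner_add_left)
  then show ?thesis by simp
qed

lemma hinner_zero_right[simp]: "hinner x (0::'a::chilbert) = 0"
  by (metis complex_cnj_zero hinner_cnj hinner_zero_left)

lemma hinner_self_zero: "hinner z z = 0 \<Longrightarrow> (z::'a::chilbert) = 0"
  by (metis norm_hinner norm_eq_zero real_sqrt_zero zero_complex.sel(1))

lemma hscaleC_decomp: "hscaleC c (v::'a::chilbert) = Re c *\<^sub>R v + Im c *\<^sub>R hscaleC \<i> v"
proof -
  have "c = complex_of_real (Re c) + complex_of_real (Im c) * \<i>" by (simp add: complex_eq_iff)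
  then have "hscaleC c v = hscaleC (complex_of_real (Re c)) v + hscaleC (complex_of_real (Im c) * \<i>) v"
    by (metis hscaleC_add_left)
  also have "\<dots> = Re c *\<^sub>R v + Im c *\<^sub>R hscaleC \<i> v"
    by (metis hscaleC_mult hscaleC_of_real)
  finally show ?thesis .
qed

lemma hscaleC_i_inj: "hscaleC \<i> v = hscaleC \<i> w \<Longrightarrow> v = (w::'a::chilbert)"
  by (metis hscaleC_mult hscaleC_one i_squared minus_mult_minus mult_1 mult_minus_left mult_minus1 complex_i_mult_minus)

lemma bclin_add: "bounded_clin f \<Longrightarrow> f (x + y) = f x + f y"
  unfolding bounded_clin_def by blast
lemma bclin_hscaleC: "bounded_clin f \<Longrightarrow> f (hscaleC c x) = hscaleC c (f x)"
  unfolding bounded_clin_def by blast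
lemma bclin_scaleR: "bounded_clin f \<Longrightarrow> f (c *\<^sub>R x) = c *\<^sub>R f x"
  by (metis bclin_hscaleC hscaleC_of_real)
lemma bclin_linear: "bounded_clin f \<Longrightarrow> linear f"
  by (simp add: bclin_add bclin_scaleR linearI)
lemma bclin_zero: "bounded_clin f \<Longrightarrow> f 0 = 0"
  using bclin_linear linear_0 by blast
lemma bclin_diff: "bounded_clin f \<Longrightarrow> f (x - y) = f x - f y"
  using bclin_linear linear_diff by blast

lemma bclin_comp: assumes "bounded_clin f" "bounded_clin g" shows "bounded_clin (f \<circ> g)"
proof -
  obtain K1 where K1: "\<forall>x. norm (f x) \<le> norm x * K1" using assms(1) unfolding bounded_clin_def by blast
  obtain K2 where K2: "\<forall>x. norm (g x) \<le> norm x * K2" using assms(2) unfolding bounded_clin_def by blast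
  have "norm (f (g x)) \<le> norm x * (max K2 0 * max K1 0)" for x
  proof -
    have "norm (f (g x)) \<le> norm (g x) * max K1 0" using K1
      by (meson dual_order.trans max.cobounded1 mult_left_mono norm_ge_zero)
    also have "\<dots> \<le> (norm x * max K2 0) * max K1 0"
      by (meson K2 dual_order.trans max.cobounded1 max.cobounded2 mult_left_mono mult_right_mono norm_ge_zero)
    finally show ?thesis by (simp add: mult.assoc)
  qed
  then show ?thesis using assms unfolding bounded_clin_def by auto
qed

lemma SA_bclin: "f \<in> SA \<Longrightarrow> bounded_clin f" unfolding SA_def by blast
lemma SA_adj: "f \<in> SA \<Longrightarrow> hinner (f x) y = hinner x (f y)" unfolding SA_def by blast

lemma SA_sandwich: assumes "p \<in> SA" "q \<in> SA" shows "p \<circ> q \<circ> p \<in> SA"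
  using assms unfolding SA_def by (auto intro!: bclin_comp)

lemma SA_sq: assumes "p \<in> SA" shows "p \<circ> p \<in> SA"
  using assms unfolding SA_def by (auto intro!: bclin_comp)


lemma jprod_eq: "jprod x y = e \<Longrightarrow> x (y v) + y (x v) = 2 *\<^sub>R e v"
proof -
  assume "jprod x y = e"
  then have "(1/2::real) *\<^sub>R (x (y v) + y (x v)) = e v" unfolding jprod_def by (metis)
  then show ?thesis by (metis scaleR_half_double scaleR_scaleR real_scaleR_def scaleR_2 field_sum_of_halves scaleR_add_left)
qed

lemma jprod_self: "jprod x x = x \<circ> x"
  unfolding jprod_def by (auto simp: scaleR_2[symmetric])

lemma jinv_inverse:
  fixes e x y :: "'a::chilbert \<Rightarrow> 'a"
  assumes eS: "e \<in> SA" and xS: "x \<in> SA" and yS: "y \<in> SA"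
    and ee: "\<And>v. e (e v) = e v" and xe: "\<And>v. x (e v) = x v" and ex: "\<And>v. e (x v) = x v"
    and J1: "jprod x y = e" and J2: "jprod (jprod x x) y = x"
  shows "\<And>v. x (y v) = e v" "\<And>v. y (x v) = e v"
proof -
  have bx: "bounded_clin x" and byy: "bounded_clin y" and be: "bounded_clin e"
    using SA_bclin assms by auto
  have E1: "x (y v) + y (x v) = 2 *\<^sub>R e v" for v using jprod_eq[OF J1] .
  have E2: "x (x (y v)) + y (x (x v)) = 2 *\<^sub>R x v" for v
    using jprod_eq[OF J2] by (simp add: jprod_self)
  have xyx: "x (y (x v)) = x v" for v
  proof -
    have A: "x (x (y v)) + x (y (x v)) = 2 *\<^sub>R x v"
      using arg_cong[OF E1[of v], of x] by (simp add: bclin_add[OF bx] bclin_scaleR[OF bx] xe)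
    have B: "x (y (x v)) + y (x (x v)) = 2 *\<^sub>R x v" using E1[of "x v"] by (simp add: ex)
    have "2 *\<^sub>R x (y (x v)) = 2 *\<^sub>R x v"
    proof -
      have "2 *\<^sub>R x (y (x v)) = (x (x (y v)) + x (y (x v))) + (x (y (x v)) + y (x (x v))) - (x (x (y v)) + y (x (x v)))"
        by (simp add: scaleR_2 algebra_simps)
      also have "\<dots> = 2 *\<^sub>R x v" using A B E2[of v] by (simp add: scaleR_2)
      finally show ?thesis .
    qed
    then show ?thesis by simp
  qed
  have xxy: "x (x (y v)) = x v" for v
  proof -
    have A: "x (x (y v)) + x (y (x v)) = 2 *\<^sub>R x v"
      using arg_cong[OF E1[of v], of x] by (simp add: bclin_add[OF bx] bclin_scaleR[OF bx] xe)
    then show ?thesis using xyx[of v] by (simp add: scaleR_2)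
  qed
  have inj: "w = 0" if "x w = 0" "e w = w" for w
  proof -
    have "x (y w) = 2 *\<^sub>R w" using E1[of w] that by (simp add: bclin_zero[OF byy])
    then have "x (x (y w)) = 0" using that by (simp add: bclin_scaleR[OF bx])
    then have "hinner (x (y w)) (x (y w)) = 0" using SA_adj[OF xS] by simp
    then have "x (y w) = 0" by (rule hinner_self_zero)
    then show ?thesis using \<open>x (y w) = 2 *\<^sub>R w\<close> by simp
  qed
  show xy: "x (y v) = e v" for v
  proof -
    have "x (y v) - e v = 0"
      by (rule inj) (simp_all add: bclin_diff[OF bx] bclin_diff[OF be] xxy xe ex ee)
    then show ?thesis by simp
  qed
  show "y (x v) = e v" for v using E1[of v] xy[of v] by (simp add: scaleR_2)
qed



lemma sum_hscaleC_delta: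
  assumes "finite B" "v \<in> B"
  shows "(\<Sum>u\<in>B. hscaleC (if u = v then k else 0) u) = hscaleC k (v::'a::chilbert)"
proof -
  have "(\<Sum>u\<in>B. hscaleC (if u = v then k else 0) u) = (\<Sum>u\<in>B. if u = v then hscaleC k u else 0)"
    by (rule sum.cong) auto
  also have "\<dots> = hscaleC k v" using assms by (simp add: sum.delta)
  finally show ?thesis .
qed

lemma hscaleC_minus_one: "hscaleC (-1) (x::'a::chilbert) = - x"
  by (metis hscaleC_of_real of_real_1 of_real_minus scaleR_minus1_left)

lemma cspan_real:
  assumes "finite B"
  shows "cspan_fin B = span (B \<union> hscaleC \<i> ` (B::'a::chilbert set))"
proof
  show "cspan_fin B \<subseteq> span (B \<union> hscaleC \<i> ` B)"
  proof
    fix x assume "x \<in> cspan_fin B"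
    then obtain c where x: "x = (\<Sum>v\<in>B. hscaleC (c v) v)" unfolding cspan_fin_def by blast
    have "hscaleC (c v) v \<in> span (B \<union> hscaleC \<i> ` B)" if "v \<in> B" for v
      unfolding hscaleC_decomp[of "c v"] using that
      by (intro span_add span_scale span_base) auto
    then show "x \<in> span (B \<union> hscaleC \<i> ` B)" unfolding x by (intro span_sum) auto
  qed
next
  have sub: "subspace (cspan_fin B)"
    unfolding subspace_def cspan_fin_def
  proof (intro conjI ballI allI)
    show "0 \<in> {\<Sum>v\<in>B. hscaleC (c v) v |c. True}"
      by (rule CollectI, rule exI[of _ "\<lambda>_. 0"]) simp
  next
    fix x y assume "x \<in> {\<Sum>v\<in>B. hscaleC (c v) v |c. True}" "y \<in> {\<Sum>v\<in>B. hscaleC (c v) v |c. True}"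
    then obtain c d where "x = (\<Sum>v\<in>B. hscaleC (c v) v)" "y = (\<Sum>v\<in>B. hscaleC (d v) v)" by blast
    then have "x + y = (\<Sum>v\<in>B. hscaleC (c v + d v) v)" by (simp add: hscaleC_add_left sum.distrib)
    then show "x + y \<in> {\<Sum>v\<in>B. hscaleC (c v) v |c. True}" by (intro CollectI exI[of _ "\<lambda>v. c v + d v"]) simp
  next
    fix t :: real and x assume "x \<in> {\<Sum>v\<in>B. hscaleC (c v) v |c. True}"
    then obtain c where "x = (\<Sum>v\<in>B. hscaleC (c v) v)" by blast
    then have "t *\<^sub>R x = (\<Sum>v\<in>B. hscaleC (complex_of_real t * c v) v)"
      by (simp add: scaleR_sum_right, intro sum.cong refl) (metis hscaleC_mult hscaleC_of_real)
    then show "t *\<^sub>R x \<in> {\<Sum>v\<in>B. hscaleC (c v) v |c. True}" by (intro CollectI exI[of _ "\<lambda>v. complex_of_real t * c v"]) simp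
  qed
  have "B \<union> hscaleC \<i> ` B \<subseteq> cspan_fin B"
  proof
    fix x assume "x \<in> B \<union> hscaleC \<i> ` B"
    then obtain v k where vk: "v \<in> B" "x = hscaleC k v"
    proof
      assume "x \<in> B" then show ?thesis using that[of x 1] by simp
    next
      assume "x \<in> hscaleC \<i> ` B" then show ?thesis using that by blast
    qed
    then have "x = (\<Sum>u\<in>B. hscaleC (if u = v then k else 0) u)" using sum_hscaleC_delta[OF assms vk(1)] by simp
    then show "x \<in> cspan_fin B" unfolding cspan_fin_def by (intro CollectI exI[of _ "\<lambda>u. if u = v then k else 0"]) simp
  qed
  then show "span (B \<union> hscaleC \<i> ` B) \<subseteq> cspan_fin B" using sub span_minimal by blast
qed

lemma cindep_real:
  assumes fin: "finite B" and ci: "cindep (B::'a::chilbert set)"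
  shows "independent (B \<union> hscaleC \<i> ` B) \<and> card (B \<union> hscaleC \<i> ` B) = 2 * card B"
proof -
  have injI: "inj_on (hscaleC \<i>) (B)" by (meson hscaleC_i_inj inj_onI)
  have disj: "B \<inter> hscaleC \<i> ` B = {}"
  proof (rule ccontr)
    assume "B \<inter> hscaleC \<i> ` B \<noteq> {}"
    then obtain v w where vw: "v \<in> B" "w \<in> B" "hscaleC \<i> v = w" by blast
    define c where "c u = (if u = v then \<i> else 0) + (if u = w then -1 else 0)" for u
    have "(\<Sum>u\<in>B. hscaleC (c u) u) = hscaleC \<i> v + hscaleC (-1) w"
      unfolding c_def hscaleC_add_left sum.distrib using sum_hscaleC_delta[OF fin vw(1)] sum_hscaleC_delta[OF fin vw(2)] by simp
    also have "\<dots> = 0" using vw by (simp add: hscaleC_minus_one)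
    finally have "c v = 0" using ci vw unfolding cindep_def by blast
    then show False unfolding c_def by (auto simp: complex_eq_iff split: if_splits)
  qed
  have card: "card (B \<union> hscaleC \<i> ` B) = 2 * card B"
    using card_Un_disjoint[OF fin finite_imageI[OF fin] disj] card_image[OF injI] by simp
  have "\<not> dependent (B \<union> hscaleC \<i> ` B)"
  proof
    assume "dependent (B \<union> hscaleC \<i> ` B)"
    then obtain u where u: "\<exists>v\<in>B \<union> hscaleC \<i> ` B. u v \<noteq> 0"
      "(\<Sum>v\<in>B \<union> hscaleC \<i> ` B. u v *\<^sub>R v) = 0"
      using real_vector.dependent_finite[of "B \<union> hscaleC \<i> ` B"] fin by auto
    have "(\<Sum>v\<in>B \<union> hscaleC \<i> ` B. u v *\<^sub>R v) = (\<Sum>v\<in>B. u v *\<^sub>R v) + (\<Sum>v\<in>hscaleC \<i> ` B. u v *\<^sub>R v)"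
      by (rule sum.union_disjoint) (use fin disj in auto)
    also have "(\<Sum>v\<in>hscaleC \<i> ` B. u v *\<^sub>R v) = (\<Sum>v\<in>B. u (hscaleC \<i> v) *\<^sub>R hscaleC \<i> v)"
      using sum.reindex[OF injI] by simp
    finally have u2: "(\<Sum>v\<in>B. u v *\<^sub>R v) + (\<Sum>v\<in>B. u (hscaleC \<i> v) *\<^sub>R hscaleC \<i> v) = 0" using u(2) by simp
    have "(\<Sum>v\<in>B. hscaleC (Complex (u v) (u (hscaleC \<i> v))) v) = 0"
    proof -
      have "(\<Sum>v\<in>B. hscaleC (Complex (u v) (u (hscaleC \<i> v))) v) = (\<Sum>v\<in>B. u v *\<^sub>R v + u (hscaleC \<i> v) *\<^sub>R hscaleC \<i> v)"
        by (rule sum.cong[OF refl]) (simp only: hscaleC_decomp[of "Complex _ _"] complex.sel)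
      also have "\<dots> = 0" using u2 by (simp add: sum.distrib)
      finally show ?thesis .
    qed
    then have "\<forall>v\<in>B. Complex (u v) (u (hscaleC \<i> v)) = 0"
      using spec[OF ci[unfolded cindep_def], of "\<lambda>v. Complex (u v) (u (hscaleC \<i> v))"] by simp
    then show False using u(1) by (auto simp: complex_eq_iff)
  qed
  then show ?thesis using card by simp
qed

lemma rank_basis:
  assumes "has_rank (f::'a::chilbert \<Rightarrow> 'a) r"
  shows "\<exists>C. finite C \<and> independent C \<and> card C = 2 * r \<and> range f = span C"
proof -
  obtain B where B: "finite B" "card B = r" "cindep B" "range f = cspan_fin B"
    using assms unfolding has_rank_def by blast
  show ?thesis
    using cindep_real[OF B(1,3)] cspan_real[OF B(1)] B by (intro exI[of _ "B \<union> hscaleC \<i> ` B"]) auto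
qed



lemma surj_dim:
  fixes g :: "'a::real_vector \<Rightarrow> 'b::real_vector"
  assumes lin: "linear g" and fb: "finite Cb" and ib: "independent Cb" and fa: "finite Ca"
    and ia: "independent Ca" and cc: "card Ca = card Cb" and inj: "inj_on g (span Cb)"
    and sub: "g ` span Cb \<subseteq> span Ca"
  shows "g ` span Cb = span Ca"
proof -
  let ?D = "g ` Cb"
  have iD: "independent ?D" using real_vector.linear_independent_injective_image[OF lin ib inj] .
  have cD: "card ?D = card Cb" by (rule card_image[OF inj_on_subset[OF inj span_superset]])
  have sD: "span ?D = g ` span Cb" using span_linear_image[OF lin] .
  have "Ca \<subseteq> span ?D"
  proof
    fix c assume c: "c \<in> Ca"
    show "c \<in> span ?D"
    proof (rule ccontr)
      assume nc: "c \<notin> span ?D"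
      then have "c \<notin> ?D" using span_base[of c ?D] by metis
      have "independent (insert c ?D)" using independent_insertI[OF nc iD] .
      moreover have "?D \<subseteq> g ` span Cb" using span_superset by (rule image_mono)
      then have "insert c ?D \<subseteq> span Ca" using c sub span_base[of c Ca] by (meson insert_subset subset_trans)
      ultimately have "card (insert c ?D) \<le> card Ca" using independent_span_bound[OF fa] by simp
      moreover have "card (insert c ?D) = card ?D + 1"
        using \<open>c \<notin> ?D\<close> fb by simp
      ultimately show False using cD cc by simp
    qed
  qed
  then have "span Ca \<subseteq> span ?D" by (simp add: span_minimal)
  then show ?thesis using sub sD by simp
qed



lemma main_dir:
  fixes a b :: "'h::chilbert \<Rightarrow> 'h"
  assumes pa: "a \<in> projs r" and pb: "b \<in> projs r"
    and inv: "jinvertible_in (V1 b) b (b \<circ> a \<circ> b)"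
  shows "jinvertible_in (V1 a) a (a \<circ> b \<circ> a)"
proof -
  have aS: "a \<in> SA" and aa0: "a \<circ> a = a" and ra: "has_rank a r" using pa unfolding projs_def by auto
  have bS: "b \<in> SA" and bb0: "b \<circ> b = b" and rb: "has_rank b r" using pb unfolding projs_def by auto
  have aa: "a (a v) = v'" if "v' = a v" for v v' using aa0 that by (metis comp_apply)
  have bb: "b (b v) = b v" for v using bb0 by (metis comp_apply)
  have aa': "a (a v) = a v" for v using aa by blast
  have ba: "bounded_clin a" "bounded_clin b" using aS bS SA_bclin by auto
  define s where "s = b \<circ> a \<circ> b"
  obtain t where tV: "t \<in> V1 b" and J1: "jprod s t = b" and J2: "jprod (jprod s s) t = s"
    using inv unfolding jinvertible_in_def s_def by blast
  obtain z where zS: "z \<in> SA" and tz: "t = b \<circ> z \<circ> b" using tV unfolding V1_def by blast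
  have tS: "t \<in> SA" using SA_sandwich[OF bS zS] tz by simp
  have sS: "s \<in> SA" using SA_sandwich[OF bS aS] s_def by simp
  have bt: "t = t" and tb: "t (b v) = t v" for v using tz bb by auto
  have bt': "b (t v) = t v" for v using tz bb by auto
  have st: "s (t v) = b v" and ts: "t (s v) = b v" for v
    using jinv_inverse[OF bS sS tS bb _ _ J1 J2] by (auto simp: s_def bb)
  have st': "b (a (b (t v))) = b v" for v using st by (simp add: s_def)
  have ts': "t (b (a (b v))) = b v" for v using ts by (simp add: s_def)
  have bt0: "bounded_clin t" using tS SA_bclin by auto
  have ker: "p = 0" if pr: "p \<in> range b" and ap: "a p = 0" for p
  proof -
    obtain q where "p = b q" using pr by blast
    then have "p = b p" using bb by simp
    also have "\<dots> = t (b (a (b p)))" using ts' by simp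
    also have "\<dots> = 0" using \<open>p = b p\<close> ap by (simp add: bclin_zero[OF ba(2)] bclin_zero[OF bt0])
    finally show ?thesis .
  qed
  have inj: "inj_on a (range b)"
  proof (rule inj_onI)
    fix p q assume "p \<in> range b" "q \<in> range b" "a p = a q"
    then obtain p' q' where "p = b p'" "q = b q'" by blast
    then have "p - q \<in> range b" using bclin_diff[OF ba(2)] by (metis rangeI)
    moreover have "a (p - q) = 0" using \<open>a p = a q\<close> bclin_diff[OF ba(1)] by simp
    ultimately have "p - q = 0" by (rule ker)
    then show "p = q" by simp
  qed
  obtain Ca where Ca: "finite Ca" "independent Ca" "card Ca = 2 * r" "range a = span Ca"
    using rank_basis[OF ra] by blast
  obtain Cb where Cb: "finite Cb" "independent Cb" "card Cb = 2 * r" "range b = span Cb"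
    using rank_basis[OF rb] by blast
  have surj: "a ` range b = range a"
    using surj_dim[OF bclin_linear[OF ba(1)] Cb(1,2) Ca(1,2)] Ca Cb inj by auto
  have key: "a (t (a v)) = a v" for v
  proof -
    have "a v \<in> a ` range b" using surj by simp
    then obtain w where w: "a v = a (b w)" by blast
    have "t (a (b w)) = t (b (a (b w)))" using tb by simp
    also have "\<dots> = b w" using ts' by simp
    finally show ?thesis using w by simp
  qed
  define x where "x = a \<circ> b \<circ> a"
  define u where "u = a \<circ> (t \<circ> t) \<circ> a"
  have uV: "u \<in> V1 a" unfolding V1_def u_def using SA_sq[OF tS] by blast
  have xu: "x (u v) = a v" for v
  proof -
    have "x (u v) = a (b (a (b (t (t (a v))))))" unfolding x_def u_def using aa' bt' by simp
    also have "\<dots> = a (b (t (a v)))" using st' by simp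
    also have "\<dots> = a v" using bt' key by simp
    finally show ?thesis .
  qed
  have ux: "u (x v) = a v" for v
  proof -
    have "u (x v) = a (t (t (b (a (b (a v))))))" unfolding x_def u_def using aa' tb by simp
    also have "\<dots> = a (t (b (a v)))" using ts' by simp
    also have "\<dots> = a v" using tb key by simp
    finally show ?thesis .
  qed
  have xa: "x (a v) = x v" "a (x v) = x v" for v unfolding x_def using aa' by auto
  have "jprod x u = a" unfolding jprod_def using xu ux by (simp add: scaleR_2[symmetric])
  moreover have "jprod (jprod x x) u = x" unfolding jprod_self unfolding jprod_def
    using xu ux xa by (simp add: scaleR_2[symmetric])
  ultimately show ?thesis unfolding jinvertible_in_def x_def using uV by blast
qed

theorem corollary4p9:
  fixes a b :: "'h::chilbert \<Rightarrow> 'h" and r :: nat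
  assumes "r > 0" and "a \<in> projs r" and "b \<in> projs r"
  shows "b \<in> antipodal r a \<longleftrightarrow> a \<in> antipodal r b"
  using main_dir[OF assms(2,3)] main_dir[OF assms(3,2)] assms(2,3)
  unfolding antipodal_def by blast

end
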